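(* Consider the problem of minimizing $\pmb{c}^T\pmb{x}$ subject to $\pmb{x}\in\mathbb{X}$ and, for each $r\in[m]$, the constraint $$\max_{\pmb{p}\in\mathcal{P}(\pi_r)}\sum_{i\in[K_r]}p_i\,(\pmb{a}^{r}_i)^T\pmb{x}\le b_r,$$ where for each $r$, $\pmb{a}^r_1,\dots,\pmb{a}^r_{K_r}\in\mathbb{R}^n$ are scenarios and $\pi_r:[K_r]\to[0,1]$ is a possibility distribution with $\pi_r(1)\ge\dots\ge\pi_r(K_r)$, $\pi_r(1)=1$. If $\mathbb{X}\subseteq\mathbb{R}^n$ is a polyhedron described by a finite system of linear constraints, then this problem is equivalent to a linear programming problem (in the variables $\pmb{x}$ together with auxiliary variables $\beta^r\in\mathbb{R}$, $\alpha^r_j\ge 0$), whose size is polynomial in $n$, $m$, $\sum_r K_r$ and the size of the description of $\mathbb{X}$.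
   Context: $\pmb{c}\in\mathbb{R}^n$, $\pmb{b}\in\mathbb{R}^m$. For a possibility distribution $\pi:[K]\to[0,1]$, $\mathcal{P}(\pi)$ denotes the set of all $\pmb{p}\in\mathbb{R}^K$ with $p_i\ge0$, $\sum_{i\in[K]}p_i=1$, and $\sum_{i\in A}p_i\ge 1-\max_{i\notin A}\pi(i)$ for every nonempty $A\subsetneq[K]$ (the set of probability distributions on the scenario indices consistent with $\pi$, i.e. dominating the necessity measure induced by $\pi$). *)

theory Defs
  imports Complex_Main
begin

text \<open>Vectors of R^n are represented as functions nat => real, only the
components with index < n being relevant. Indices are 0-based:
[K] is rendered as {..<K}.\<close>

definition dotn :: "nat \<Rightarrow> (nat \<Rightarrow> real) \<Rightarrow> (nat \<Rightarrow> real) \<Rightarrow> real" where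
  "dotn n u v = (\<Sum>i<n. u i * v i)"

text \<open>The set P(pi) of probability distributions on [K] dominating the
necessity measure induced by the possibility distribution pi.\<close>
definition Pposs :: "nat \<Rightarrow> (nat \<Rightarrow> real) \<Rightarrow> (nat \<Rightarrow> real) set" where
  "Pposs K \<pi> = {p. (\<forall>i<K. 0 \<le> p i) \<and> (\<Sum>i<K. p i) = 1 \<and>
     (\<forall>A. A \<noteq> {} \<and> A \<subset> {..<K} \<longrightarrow>
          (\<Sum>i\<in>A. p i) \<ge> 1 - Max (\<pi> ` ({..<K} - A)))}"

definition ordered_possdist :: "nat \<Rightarrow> (nat \<Rightarrow> real) \<Rightarrow> bool" where
  "ordered_possdist K \<pi> \<longleftrightarrow> 1 \<le> K \<and> (\<forall>i<K. 0 \<le> \<pi> i \<and> \<pi> i \<le> 1) \<and> \<pi> 0 = 1 \<and>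
     (\<forall>i j. i \<le> j \<longrightarrow> j < K \<longrightarrow> \<pi> j \<le> \<pi> i)"

end

theory Submission
  imports Defs
begin


definition pe :: "nat \<Rightarrow> (nat \<Rightarrow> real) \<Rightarrow> nat \<Rightarrow> real" where
  "pe K \<pi> k = (if k < K then \<pi> k else 0)"
definition wt :: "nat \<Rightarrow> (nat \<Rightarrow> real) \<Rightarrow> nat \<Rightarrow> real" where
  "wt K \<pi> k = pe K \<pi> k - pe K \<pi> (Suc k)"
definition dd :: "(nat \<Rightarrow> real) \<Rightarrow> nat \<Rightarrow> real" where
  "dd f j = f j - (if j = 0 then 0 else f (j - 1))"

lemma tel: "(\<Sum>j\<le>i. dd f j) = f i"
  by (induction i) (simp_all add: dd_def)

lemma abel: "(\<Sum>i<K. p i * f i) = (\<Sum>j<K. (\<Sum>i\<in>{j..<K}. p i) * dd f j)"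
proof -
  have 1: "(\<Sum>i\<in>{j..<K}. p i) = (\<Sum>i<K. if j \<le> i then p i else 0)" for j
  proof -
    have "{i\<in>{..<K}. j \<le> i} = {j..<K}" by auto
    then show ?thesis using sum.inter_filter[of "{..<K}" p "\<lambda>i. j \<le> i"] by simp
  qed
  have 2: "(\<Sum>j<K. if j \<le> i then dd f j else 0) = (\<Sum>j\<le>i. dd f j)" if "i < K" for i
  proof -
    have "{j\<in>{..<K}. j \<le> i} = {..i}" using that by auto
    then show ?thesis using sum.inter_filter[of "{..<K}" "dd f" "\<lambda>j. j \<le> i"] by simp
  qed
  have "(\<Sum>j<K. (\<Sum>i\<in>{j..<K}. p i) * dd f j) = (\<Sum>j<K. \<Sum>i<K. if j \<le> i then p i * dd f j else 0)"
    by (auto simp add: 1 sum_distrib_right intro!: sum.cong)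
  also have "\<dots> = (\<Sum>i<K. \<Sum>j<K. if j \<le> i then p i * dd f j else 0)"
    by (rule sum.swap)
  also have "\<dots> = (\<Sum>i<K. p i * (\<Sum>j<K. if j \<le> i then dd f j else 0))"
    by (auto simp add: sum_distrib_left intro!: sum.cong)
  also have "\<dots> = (\<Sum>i<K. p i * f i)"
    by (rule sum.cong) (simp_all add: 2 tel)
  finally show ?thesis by simp
qed

lemma wt_nonneg: "ordered_possdist K \<pi> \<Longrightarrow> 0 \<le> wt K \<pi> k"
  unfolding ordered_possdist_def wt_def pe_def by auto

lemma wt_tail: "j \<le> K \<Longrightarrow> (\<Sum>k\<in>{j..<K}. wt K \<pi> k) = pe K \<pi> j"
proof -
  assume "j \<le> K"
  have "(\<Sum>k\<in>{j..<K}. wt K \<pi> k) = - (\<Sum>k\<in>{j..<K}. pe K \<pi> (Suc k) - pe K \<pi> k)"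
    by (simp add: wt_def sum_negf[symmetric])
  also have "\<dots> = pe K \<pi> j" using sum_Suc_diff'[OF \<open>j \<le> K\<close>, of "pe K \<pi>"] by (simp add: pe_def)
  finally show ?thesis .
qed

lemma wt_head: "(\<Sum>k<j. wt K \<pi> k) = pe K \<pi> 0 - pe K \<pi> j"
  unfolding wt_def by (rule sum_lessThan_telescope')



lemma Max_tail:
  assumes "ordered_possdist K \<pi>" "j < K"
  shows "Max (\<pi> ` {j..<K}) = \<pi> j"
  using assms unfolding ordered_possdist_def
  by (intro Max_eqI) auto

lemma tail_le:
  assumes o: "ordered_possdist K \<pi>" and p: "p \<in> Pposs K \<pi>" and j: "0 < j" "j < K"
  shows "(\<Sum>i\<in>{j..<K}. p i) \<le> \<pi> j"
proof -
  have A: "{..<j} \<noteq> {} \<and> {..<j} \<subset> {..<K}" using j by auto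
  have all: "\<forall>A. A \<noteq> {} \<and> A \<subset> {..<K} \<longrightarrow> (\<Sum>i\<in>A. p i) \<ge> 1 - Max (\<pi> ` ({..<K} - A))"
    using p unfolding Pposs_def mem_Collect_eq by (elim conjE)
  have "(\<Sum>i\<in>{..<j}. p i) \<ge> 1 - Max (\<pi> ` ({..<K} - {..<j}))"
    using mp[OF spec[OF all, of "{..<j}"] A] .
  moreover have "{..<K} - {..<j} = {j..<K}" by auto
  moreover have sp: "{..<K} = {..<j} \<union> {j..<K}" using j by auto
  moreover have "(\<Sum>i<K. p i) = (\<Sum>i<j. p i) + (\<Sum>i\<in>{j..<K}. p i)"
    by (subst sp) (rule sum.union_disjoint, auto)
  moreover have "(\<Sum>i<K. p i) = 1" using p unfolding Pposs_def mem_Collect_eq by (elim conjE)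
  ultimately show ?thesis using Max_tail[OF o j(2)] by simp
qed

lemma weak:
  assumes o: "ordered_possdist K \<pi>" and p: "p \<in> Pposs K \<pi>"
    and cs: "\<forall>i<K. c i \<le> s i" and mono: "\<forall>i<K. 0 < i \<longrightarrow> s (i - 1) \<le> s i"
  shows "(\<Sum>i<K. p i * c i) \<le> (\<Sum>k<K. wt K \<pi> k * s k)"
proof -
  have p0: "\<forall>i<K. 0 \<le> p i" and p1: "(\<Sum>i<K. p i) = 1" using p unfolding Pposs_def by auto
  have "(\<Sum>i<K. p i * c i) \<le> (\<Sum>i<K. p i * s i)"
    using p0 cs by (intro sum_mono mult_left_mono) auto
  also have "\<dots> = (\<Sum>j<K. (\<Sum>i\<in>{j..<K}. p i) * dd s j)" by (rule abel)
  also have "\<dots> \<le> (\<Sum>j<K. (\<Sum>i\<in>{j..<K}. wt K \<pi> i) * dd s j)"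
  proof (rule sum_mono)
    fix j assume j: "j \<in> {..<K}"
    have t: "(\<Sum>i\<in>{j..<K}. wt K \<pi> i) = \<pi> j" using j wt_tail[of j K \<pi>] by (simp add: pe_def)
    show "(\<Sum>i\<in>{j..<K}. p i) * dd s j \<le> (\<Sum>i\<in>{j..<K}. wt K \<pi> i) * dd s j"
    proof (cases "j = 0")
      case True
      then have "{j..<K} = {..<K}" by auto
      then show ?thesis using p1 t True o by (simp add: ordered_possdist_def)
    next
      case False
      then have "0 \<le> dd s j" using mono j by (simp add: dd_def)
      then show ?thesis using tail_le[OF o p] False j t by (simp add: mult_right_mono)
    qed
  qed
  also have "\<dots> = (\<Sum>k<K. wt K \<pi> k * s k)" by (rule abel[symmetric])
  finally show ?thesis .
qed

definition runmax :: "(nat \<Rightarrow> real) \<Rightarrow> nat \<Rightarrow> real" where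
  "runmax c k = Max (c ` {..k})"

lemma delta_sum': "(\<Sum>i<(K::nat). (if j = i then w else 0) * (c i::real)) = (if j < K then w * c j else 0)"
proof -
  have "(\<Sum>i<(K::nat). (if j = i then w else 0) * (c i::real)) = (\<Sum>i<K. if j = i then w * c i else 0)"
    by (rule sum.cong) auto
  also have "\<dots> = (if j < K then w * c j else 0)" by (simp only: sum.delta' finite_lessThan lessThan_iff)
  finally show ?thesis .
qed

lemma construct:
  assumes o: "ordered_possdist K \<pi>"
  shows "\<exists>p \<in> Pposs K \<pi>. (\<Sum>i<K. p i * c i) = (\<Sum>k<K. wt K \<pi> k * runmax c k)"
proof -
  have "\<forall>k. \<exists>i. i \<le> k \<and> c i = runmax c k"
  proof
    fix k
    have "runmax c k \<in> c ` {..k}" unfolding runmax_def by (intro Max_in) auto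
    then show "\<exists>i. i \<le> k \<and> c i = runmax c k" by auto
  qed
  from choice[OF this] obtain am where am0: "\<forall>k. am k \<le> k \<and> c (am k) = runmax c k" by blast
  then have am: "\<And>k. am k \<le> k \<and> c (am k) = runmax c k" by blast
  define ps where "ps i = (\<Sum>k<K. if am k = i then wt K \<pi> k else 0)" for i
  have wn: "\<And>k. 0 \<le> wt K \<pi> k" using wt_nonneg[OF o] .
  have sumA: "(\<Sum>i\<in>A. ps i) = (\<Sum>k<K. if am k \<in> A then wt K \<pi> k else 0)" if "finite A" for A
  proof -
    have "(\<Sum>i\<in>A. ps i) = (\<Sum>k<K. \<Sum>i\<in>A. if am k = i then wt K \<pi> k else 0)"
      unfolding ps_def by (rule sum.swap)
    also have "\<dots> = (\<Sum>k<K. if am k \<in> A then wt K \<pi> k else 0)"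
      using that by simp
    finally show ?thesis .
  qed
  have K1: "1 \<le> K" "\<pi> 0 = 1" using o unfolding ordered_possdist_def by auto
  have amK: "k < K \<Longrightarrow> am k < K" for k using am[of k] by auto
  have tot: "(\<Sum>i<K. ps i) = 1"
  proof -
    have "(\<Sum>i<K. ps i) = (\<Sum>k<K. if am k \<in> {..<K} then wt K \<pi> k else 0)"
      by (rule sumA) simp
    also have "\<dots> = (\<Sum>k<K. wt K \<pi> k)"
      by (rule sum.cong) (auto simp: amK)
    also have "\<dots> = 1" using wt_head[of K \<pi> K] K1 by (simp add: pe_def)
    finally show ?thesis .
  qed
  have c1: "\<forall>i<K. 0 \<le> ps i" unfolding ps_def using wn by (auto intro!: sum_nonneg)
  have c3: "\<forall>A. A \<noteq> {} \<and> A \<subset> {..<K} \<longrightarrow> (\<Sum>i\<in>A. ps i) \<ge> 1 - Max (\<pi> ` ({..<K} - A))"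
  proof (intro allI impI)
    fix A :: "nat set" assume A: "A \<noteq> {} \<and> A \<subset> {..<K}"
    define k0 where "k0 = Min ({..<K} - A)"
    have ne: "{..<K} - A \<noteq> {}" using A by auto
    have k0in: "k0 \<in> {..<K} - A" unfolding k0_def using ne by (intro Min_in) auto
    have k0le: "\<And>y. y \<in> {..<K} - A \<Longrightarrow> k0 \<le> y" unfolding k0_def by (intro Min_le) auto
    have mx: "Max (\<pi> ` ({..<K} - A)) = \<pi> k0"
      using o k0in k0le unfolding ordered_possdist_def by (intro Max_eqI) auto
    have fA: "finite A" using A finite_subset[of A "{..<K}"] by auto
    have "(\<Sum>k<K. if k < k0 then wt K \<pi> k else 0) \<le> (\<Sum>k<K. if am k \<in> A then wt K \<pi> k else 0)"
    proof (rule sum_mono)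
      fix k assume k: "k \<in> {..<K}"
      show "(if k < k0 then wt K \<pi> k else 0) \<le> (if am k \<in> A then wt K \<pi> k else 0)"
      proof (cases "k < k0")
        case True
        have "am k \<in> A"
        proof (rule ccontr)
          assume "am k \<notin> A"
          then have "am k \<in> {..<K} - A" using amK k by auto
          then have "k0 \<le> am k" by (rule k0le)
          then show False using am[of k] True by auto
        qed
        then show ?thesis using True by simp
      next
        case False then show ?thesis using wn by simp
      qed
    qed
    moreover have "(\<Sum>k<K. if k < k0 then wt K \<pi> k else 0) = (\<Sum>k<k0. wt K \<pi> k)"
    proof -
      have "{k\<in>{..<K}. k < k0} = {..<k0}" using k0in by auto
      then show ?thesis using sum.inter_filter[of "{..<K}" "wt K \<pi>" "\<lambda>k. k < k0"] by simp
    qed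
    moreover have "(\<Sum>k<k0. wt K \<pi> k) = 1 - \<pi> k0"
      using wt_head[of K \<pi> k0] K1 k0in by (simp add: pe_def)
    ultimately show "1 - Max (\<pi> ` ({..<K} - A)) \<le> (\<Sum>i\<in>A. ps i)"
      using mx sumA[OF fA] by simp
  qed
  have mem: "ps \<in> Pposs K \<pi>" unfolding Pposs_def mem_Collect_eq by (intro conjI c1 tot c3)
  have "(\<Sum>i<K. ps i * c i) = (\<Sum>i<K. \<Sum>k<K. (if am k = i then wt K \<pi> k else 0) * c i)"
    unfolding ps_def by (simp only: sum_distrib_right)
  also have "\<dots> = (\<Sum>k<K. \<Sum>i<K. (if am k = i then wt K \<pi> k else 0) * c i)"
    by (rule sum.swap)
  also have "\<dots> = (\<Sum>k<K. if am k < K then wt K \<pi> k * c (am k) else 0)"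
    by (simp only: delta_sum')
  also have "\<dots> = (\<Sum>k<K. wt K \<pi> k * runmax c k)"
    by (rule sum.cong) (simp_all add: amK am)
  finally show ?thesis using mem by blast
qed

lemma sup_iff:
  assumes o: "ordered_possdist K \<pi>"
  shows "((SUP p\<in>Pposs K \<pi>. \<Sum>i<K. p i * c i) \<le> b) \<longleftrightarrow>
    (\<exists>s. (\<forall>i<K. c i \<le> s i) \<and> (\<forall>i<K. 0 < i \<longrightarrow> s (i - 1) \<le> s i) \<and> (\<Sum>k<K. wt K \<pi> k * s k) \<le> b)"
proof
  obtain ps where ps: "ps \<in> Pposs K \<pi>" "(\<Sum>i<K. ps i * c i) = (\<Sum>k<K. wt K \<pi> k * runmax c k)"
    using construct[OF o] by blast
  have r1: "\<forall>i<K. c i \<le> runmax c i" unfolding runmax_def by auto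
  have r2: "\<forall>i<K. 0 < i \<longrightarrow> runmax c (i - 1) \<le> runmax c i"
    unfolding runmax_def by (auto intro!: Max_mono)
  {
    assume le: "(SUP p\<in>Pposs K \<pi>. \<Sum>i<K. p i * c i) \<le> b"
    have bdd: "bdd_above ((\<lambda>p. \<Sum>i<K. p i * c i) ` Pposs K \<pi>)"
      by (rule bdd_aboveI2, rule weak[OF o _ r1 r2])
    have "(\<Sum>k<K. wt K \<pi> k * runmax c k) \<le> b"
      using cSUP_upper[OF ps(1) bdd] ps(2) le by simp
    then show "\<exists>s. (\<forall>i<K. c i \<le> s i) \<and> (\<forall>i<K. 0 < i \<longrightarrow> s (i - 1) \<le> s i) \<and> (\<Sum>k<K. wt K \<pi> k * s k) \<le> b"
      using r1 r2 by blast
  }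
  {
    assume "\<exists>s. (\<forall>i<K. c i \<le> s i) \<and> (\<forall>i<K. 0 < i \<longrightarrow> s (i - 1) \<le> s i) \<and> (\<Sum>k<K. wt K \<pi> k * s k) \<le> b"
    then obtain s where s: "\<forall>i<K. c i \<le> s i" "\<forall>i<K. 0 < i \<longrightarrow> s (i - 1) \<le> s i" "(\<Sum>k<K. wt K \<pi> k * s k) \<le> b"
      by blast
    show "(SUP p\<in>Pposs K \<pi>. \<Sum>i<K. p i * c i) \<le> b"
    proof (rule cSUP_least)
      show "Pposs K \<pi> \<noteq> {}" using ps(1) by blast
      fix p assume "p \<in> Pposs K \<pi>"
      then show "(\<Sum>i<K. p i * c i) \<le> b" using weak[OF o _ s(1) s(2)] s(3) by (meson order_trans)
    qed
  }
qed



definition lprep :: "nat \<Rightarrow> ((nat \<Rightarrow> real) \<Rightarrow> bool) \<Rightarrow> nat \<Rightarrow> nat \<Rightarrow> bool" where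
  "lprep n S N M \<longleftrightarrow> (\<exists>(D::nat \<Rightarrow> nat \<Rightarrow> real) (E::nat \<Rightarrow> nat \<Rightarrow> real) (f::nat \<Rightarrow> real).
     \<forall>x. S x \<longleftrightarrow> (\<exists>y::nat \<Rightarrow> real. \<forall>j<M. dotn n (D j) x + (\<Sum>k<N. E j k * y k) \<le> f j))"

definition rowsrep :: "nat \<Rightarrow> nat \<Rightarrow> nat \<Rightarrow> ((nat \<Rightarrow> real) \<Rightarrow> (nat \<Rightarrow> real) \<Rightarrow> bool) \<Rightarrow> bool" where
  "rowsrep n N M P \<longleftrightarrow> (\<exists>(D::nat \<Rightarrow> nat \<Rightarrow> real) (E::nat \<Rightarrow> nat \<Rightarrow> real) (f::nat \<Rightarrow> real).
     \<forall>x y. P x y \<longleftrightarrow> (\<forall>j<M. dotn n (D j) x + (\<Sum>k<N. E j k * y k) \<le> f j))"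

lemma all_split: "(\<forall>j<(M1::nat)+M2. P j) \<longleftrightarrow> (\<forall>j<M1. P j) \<and> (\<forall>j<M2. P (M1 + j))"
proof -
  have "j < M1 + M2 \<Longrightarrow> \<not> j < M1 \<Longrightarrow> \<exists>j'. j = M1 + j' \<and> j' < M2" for j
    by (rule exI[of _ "j - M1"]) auto
  then show ?thesis by auto
qed

lemma sum_split: "(\<Sum>k<N1+(N2::nat). g k) = (\<Sum>k<N1. g k) + (\<Sum>k<N2. (g (k + N1)::real))"
  by (induct N2) (simp_all add: add.commute add.left_commute)

lemma rows_conj:
  assumes "rowsrep n N M1 P" "rowsrep n N M2 Q"
  shows "rowsrep n N (M1 + M2) (\<lambda>x y. P x y \<and> Q x y)"
proof -
  obtain D1 E1 f1 where 1: "\<forall>x y. P x y \<longleftrightarrow> (\<forall>j<M1. dotn n (D1 j) x + (\<Sum>k<N. E1 j k * y k) \<le> f1 j)"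
    using assms(1) unfolding rowsrep_def by blast
  obtain D2 E2 f2 where 2: "\<forall>x y. Q x y \<longleftrightarrow> (\<forall>j<M2. dotn n (D2 j) x + (\<Sum>k<N. E2 j k * y k) \<le> f2 j)"
    using assms(2) unfolding rowsrep_def by blast
  let ?D = "\<lambda>j. if j < M1 then D1 j else D2 (j - M1)"
  let ?E = "\<lambda>j. if j < M1 then E1 j else E2 (j - M1)"
  let ?f = "\<lambda>j. if j < M1 then f1 j else f2 (j - M1)"
  show ?thesis unfolding rowsrep_def
    by (rule exI[of _ ?D], rule exI[of _ ?E], rule exI[of _ ?f]) (simp add: all_split 1 2)
qed

lemma lprep_conj:
  assumes "lprep n S N1 M1" "lprep n T N2 M2"
  shows "lprep n (\<lambda>x. S x \<and> T x) (N1 + N2) (M1 + M2)"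
proof -
  obtain D1 E1 f1 where 1: "\<forall>x. S x \<longleftrightarrow> (\<exists>y::nat \<Rightarrow> real. \<forall>j<M1. dotn n (D1 j) x + (\<Sum>k<N1. E1 j k * y k) \<le> f1 j)"
    using assms(1) unfolding lprep_def by blast
  obtain D2 E2 f2 where 2: "\<forall>x. T x \<longleftrightarrow> (\<exists>y::nat \<Rightarrow> real. \<forall>j<M2. dotn n (D2 j) x + (\<Sum>k<N2. E2 j k * y k) \<le> f2 j)"
    using assms(2) unfolding lprep_def by blast
  define D where "D j = (if j < M1 then D1 j else D2 (j - M1))" for j
  define E where "E j k = (if j < M1 then (if k < N1 then E1 j k else 0)
      else (if k < N1 then 0 else E2 (j - M1) (k - N1)))" for j k
  define f where "f j = (if j < M1 then f1 j else f2 (j - M1))" for j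
  have s1: "(\<Sum>k<N1+N2. E j k * y k) = (\<Sum>k<N1. E1 j k * y k)" if "j < M1" for j and y :: "nat \<Rightarrow> real"
    using that by (simp add: sum_split E_def)
  have s2: "(\<Sum>k<N1+N2. E (M1 + j) k * y k) = (\<Sum>k<N2. E2 j k * y (k + N1))" for j and y :: "nat \<Rightarrow> real"
    by (simp add: sum_split E_def)
  have eq: "(\<forall>j<M1+M2. dotn n (D j) x + (\<Sum>k<N1+N2. E j k * y k) \<le> f j) \<longleftrightarrow>
      (\<forall>j<M1. dotn n (D1 j) x + (\<Sum>k<N1. E1 j k * y k) \<le> f1 j) \<and>
      (\<forall>j<M2. dotn n (D2 j) x + (\<Sum>k<N2. E2 j k * y (k + N1)) \<le> f2 j)" for x y
    unfolding all_split by (simp add: s1 s2 D_def f_def)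
  have main: "(S x \<and> T x) \<longleftrightarrow> (\<exists>y::nat \<Rightarrow> real. \<forall>j<M1+M2. dotn n (D j) x + (\<Sum>k<N1+N2. E j k * y k) \<le> f j)" for x
  proof
    assume "S x \<and> T x"
    then have "S x" "T x" by auto
    obtain y1 :: "nat \<Rightarrow> real" where
      y1: "\<forall>j<M1. dotn n (D1 j) x + (\<Sum>k<N1. E1 j k * y1 k) \<le> f1 j"
      using iffD1[OF spec[OF 1, of x] \<open>S x\<close>] by (elim exE)
    obtain y2 :: "nat \<Rightarrow> real" where
      y2: "\<forall>j<M2. dotn n (D2 j) x + (\<Sum>k<N2. E2 j k * y2 k) \<le> f2 j"
      using iffD1[OF spec[OF 2, of x] \<open>T x\<close>] by (elim exE)
    define y where "y k = (if k < N1 then y1 k else y2 (k - N1))" for k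
    have e1: "(\<Sum>k<N1. E1 j k * y k) = (\<Sum>k<N1. E1 j k * y1 k)" for j
      by (rule sum.cong) (simp_all add: y_def)
    have e2: "y (k + N1) = y2 k" for k by (simp add: y_def)
    have "(\<forall>j<M1. dotn n (D1 j) x + (\<Sum>k<N1. E1 j k * y k) \<le> f1 j) \<and>
      (\<forall>j<M2. dotn n (D2 j) x + (\<Sum>k<N2. E2 j k * y (k + N1)) \<le> f2 j)"
      unfolding e1 e2 using y1 y2 by (intro conjI)
    then have "\<forall>j<M1+M2. dotn n (D j) x + (\<Sum>k<N1+N2. E j k * y k) \<le> f j"
      by (subst eq)
    then show "\<exists>y::nat \<Rightarrow> real. \<forall>j<M1+M2. dotn n (D j) x + (\<Sum>k<N1+N2. E j k * y k) \<le> f j"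
      by (rule exI[of _ y])
  next
    assume "\<exists>y::nat \<Rightarrow> real. \<forall>j<M1+M2. dotn n (D j) x + (\<Sum>k<N1+N2. E j k * y k) \<le> f j"
    then obtain y :: "nat \<Rightarrow> real" where yy: "\<forall>j<M1+M2. dotn n (D j) x + (\<Sum>k<N1+N2. E j k * y k) \<le> f j"
      by (elim exE)
    have c: "(\<forall>j<M1. dotn n (D1 j) x + (\<Sum>k<N1. E1 j k * y k) \<le> f1 j) \<and>
      (\<forall>j<M2. dotn n (D2 j) x + (\<Sum>k<N2. E2 j k * y (k + N1)) \<le> f2 j)"
      using yy by (subst (asm) eq)
    have "S x" by (rule iffD2[OF spec[OF 1, of x]], rule exI[of _ y], rule conjunct1[OF c])
    moreover have "T x" by (rule iffD2[OF spec[OF 2, of x]], rule exI[of _ "\<lambda>k. y (k + N1)"], rule conjunct2[OF c])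
    ultimately show "S x \<and> T x" by (rule conjI)
  qed
  show ?thesis unfolding lprep_def
    by (rule exI[of _ D], rule exI[of _ E], rule exI[of _ f], intro allI main)
qed

lemma lprep_cong: "lprep n S N M \<Longrightarrow> (\<And>x. S x = T x) \<Longrightarrow> lprep n T N M"
  unfolding lprep_def by simp

lemma lprep_all:
  assumes "\<forall>r<(m::nat). lprep n (P r) (N r) (M r)"
  shows "lprep n (\<lambda>x. \<forall>r<m. P r x) (\<Sum>r<m. N r) (\<Sum>r<m. M r)"
  using assms
proof (induction m)
  case 0
  show ?case unfolding lprep_def by simp
next
  case (Suc m)
  have "lprep n (\<lambda>x. (\<forall>r<m. P r x) \<and> P m x) ((\<Sum>r<m. N r) + N m) ((\<Sum>r<m. M r) + M m)"
    using Suc by (intro lprep_conj) auto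
  then have "lprep n (\<lambda>x. (\<forall>r<m. P r x) \<and> P m x) (\<Sum>r<Suc m. N r) (\<Sum>r<Suc m. M r)" by simp
  then show ?case by (rule lprep_cong) (auto simp: less_Suc_eq)
qed

lemma rows_lprep: "rowsrep n N M P \<Longrightarrow> lprep n (\<lambda>x. \<exists>y. P x y) N M"
  unfolding rowsrep_def lprep_def by metis

lemma delta_sum: "(\<Sum>k<(K::nat). (if k = j then c else 0) * (y k::real)) = (if j < K then c * y j else 0)"
proof -
  have "(\<Sum>k<K. (if k = j then c else 0) * (y k::real)) = (\<Sum>k<K. if k = j then c * y k else 0)"
    by (rule sum.cong) auto
  also have "\<dots> = (if j < K then c * y j else 0)" by (simp only: sum.delta finite_lessThan lessThan_iff)
  finally show ?thesis .
qed

lemma block1: "rowsrep n K K (\<lambda>x y. \<forall>i<K. dotn n (a i) x \<le> y i)"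
  unfolding rowsrep_def
  by (intro exI[of _ a] exI[of _ "\<lambda>i k. if k = i then -1 else 0"] exI[of _ "\<lambda>_. 0"]) (auto simp: delta_sum)

lemma dotn0: "dotn n (\<lambda>_. 0) x = 0" by (simp add: dotn_def)

lemma block2: "rowsrep n K K (\<lambda>x y. \<forall>i<K. 0 < i \<longrightarrow> y (i - 1) \<le> y i)"
proof -
  have "(\<Sum>k<K. ((if k = i - 1 then (if 0 < i then 1 else 0) else 0) + (if k = i then (if 0 < i then -1 else 0) else 0)) * y k)
      = (if 0 < i then y (i - 1) - y i else 0)" if "i < K" for i and y :: "nat \<Rightarrow> real"
    using that by (auto simp add: distrib_right sum.distrib delta_sum)
  then show ?thesis unfolding rowsrep_def
    by (intro exI[of _ "\<lambda>_ _. 0"]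
        exI[of _ "\<lambda>i k. (if k = i - 1 then (if 0 < i then 1 else 0) else 0) + (if k = i then (if 0 < i then -1 else 0) else 0)"]
        exI[of _ "\<lambda>_. 0"]) (auto simp: dotn0)
qed

lemma block3: "rowsrep n K 1 (\<lambda>x y. (\<Sum>k<K. w k * y k) \<le> (b::real))"
  unfolding rowsrep_def
  by (intro exI[of _ "\<lambda>_ _. 0"] exI[of _ "\<lambda>_. w"] exI[of _ "\<lambda>_. b"]) (auto simp: dotn0)

lemma per_r:
  assumes o: "ordered_possdist K \<pi>"
  shows "lprep n (\<lambda>x. (SUP p\<in>Pposs K \<pi>. \<Sum>i<K. p i * dotn n (a i) x) \<le> b) K (K + K + 1)"
proof -
  have "rowsrep n K (K + K + 1) (\<lambda>x y. ((\<forall>i<K. dotn n (a i) x \<le> y i) \<and> (\<forall>i<K. 0 < i \<longrightarrow> y (i - 1) \<le> y i))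
      \<and> (\<Sum>k<K. wt K \<pi> k * y k) \<le> b)"
    by (intro rows_conj block1 block2 block3)
  from rows_lprep[OF this] show ?thesis
    by (rule lprep_cong) (simp add: sup_iff[OF o] conj_assoc)
qed



lemma sumK: "(\<Sum>r<(m::nat). K r + K r + 1) = 2 * (\<Sum>r<m. K r) + (m::nat)"
  by (induct m) auto

theorem corollary1:
  shows "\<exists>C d :: nat. \<forall>(n::nat) (m::nat) (K::nat \<Rightarrow> nat) (\<pi>::nat \<Rightarrow> nat \<Rightarrow> real)
      (a::nat \<Rightarrow> nat \<Rightarrow> nat \<Rightarrow> real) (b::nat \<Rightarrow> real)
      (q::nat) (G::nat \<Rightarrow> nat \<Rightarrow> real) (h::nat \<Rightarrow> real).
    (\<forall>r<m. ordered_possdist (K r) (\<pi> r)) \<longrightarrow>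
    (\<exists>(N::nat) (M::nat) (D::nat \<Rightarrow> nat \<Rightarrow> real) (E::nat \<Rightarrow> nat \<Rightarrow> real) (f::nat \<Rightarrow> real).
       N + M \<le> C * (n + m + (\<Sum>r<m. K r) + q + 1) ^ d \<and>
       (\<forall>x::nat \<Rightarrow> real.
          ((\<forall>j<q. dotn n (G j) x \<le> h j) \<and>
           (\<forall>r<m. (SUP p\<in>Pposs (K r) (\<pi> r). \<Sum>i<K r. p i * dotn n (a r i) x) \<le> b r))
          \<longleftrightarrow>
          (\<exists>y::nat \<Rightarrow> real. \<forall>j<M. dotn n (D j) x + (\<Sum>k<N. E j k * y k) \<le> f j)))"
proof (rule exI[of _ 3], rule exI[of _ 1], intro allI impI)
  fix n m :: nat and K :: "nat \<Rightarrow> nat" and \<pi> :: "nat \<Rightarrow> nat \<Rightarrow> real"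
    and a :: "nat \<Rightarrow> nat \<Rightarrow> nat \<Rightarrow> real" and b :: "nat \<Rightarrow> real"
    and q :: nat and G :: "nat \<Rightarrow> nat \<Rightarrow> real" and h :: "nat \<Rightarrow> real"
  assume o: "\<forall>r<m. ordered_possdist (K r) (\<pi> r)"
  have g: "lprep n (\<lambda>x. \<forall>j<q. dotn n (G j) x \<le> h j) 0 q"
    unfolding lprep_def by (intro exI[of _ G] exI[of _ "\<lambda>_ _. 0"] exI[of _ h]) simp
  have pr: "\<forall>r<m. lprep n (\<lambda>x. (SUP p\<in>Pposs (K r) (\<pi> r). \<Sum>i<K r. p i * dotn n (a r i) x) \<le> b r)
      (K r) (K r + K r + 1)"
    using o per_r by blast
  have all: "lprep n (\<lambda>x. \<forall>r<m. (SUP p\<in>Pposs (K r) (\<pi> r). \<Sum>i<K r. p i * dotn n (a r i) x) \<le> b r)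
      (\<Sum>r<m. K r) (\<Sum>r<m. K r + K r + 1)"
    by (rule lprep_all[OF pr])
  from lprep_conj[OF g all] obtain D E f where
    DEf: "\<forall>x. ((\<forall>j<q. dotn n (G j) x \<le> h j) \<and>
           (\<forall>r<m. (SUP p\<in>Pposs (K r) (\<pi> r). \<Sum>i<K r. p i * dotn n (a r i) x) \<le> b r))
          \<longleftrightarrow> (\<exists>y::nat \<Rightarrow> real. \<forall>j<q + (\<Sum>r<m. K r + K r + 1). dotn n (D j) x
               + (\<Sum>k<0 + (\<Sum>r<m. K r). E j k * y k) \<le> f j)"
    unfolding lprep_def by blast
  have bnd: "(0 + (\<Sum>r<m. K r)) + (q + (\<Sum>r<m. K r + K r + 1)) \<le> 3 * (n + m + (\<Sum>r<m. K r) + q + 1) ^ 1"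
  proof -
    have "(\<Sum>r<m. K r + K r + 1) = 2 * (\<Sum>r<m. K r) + m" by (rule sumK)
    then show ?thesis by simp
  qed
  show "\<exists>(N::nat) (M::nat) (D::nat \<Rightarrow> nat \<Rightarrow> real) (E::nat \<Rightarrow> nat \<Rightarrow> real) (f::nat \<Rightarrow> real).
       N + M \<le> 3 * (n + m + (\<Sum>r<m. K r) + q + 1) ^ 1 \<and>
       (\<forall>x::nat \<Rightarrow> real.
          ((\<forall>j<q. dotn n (G j) x \<le> h j) \<and>
           (\<forall>r<m. (SUP p\<in>Pposs (K r) (\<pi> r). \<Sum>i<K r. p i * dotn n (a r i) x) \<le> b r))
          \<longleftrightarrow>
          (\<exists>y::nat \<Rightarrow> real. \<forall>j<M. dotn n (D j) x + (\<Sum>k<N. E j k * y k) \<le> f j))"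
    using bnd DEf by blast
qed


end
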